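(* Let $\mathfrak{R}$ be a read set with maximal read length $L$. Then every string of length $2L$ and every non-contained read of $\mathfrak{R}$ is a conductor for $\mathrm{CC}(\mathfrak{R})$.
   Context: All strings are over a fixed finite alphabet $\Sigma$ (in the paper's convention this is the alphabet of $k$-mers, so overlaps of length at least $1$ correspond to overlaps of at least $k$ nucleotides). A cyclic string is a bi-infinite periodic word $\mathbb{Z}\to\Sigma$ up to shift; for a nonempty finite $x$, $\langle x\rangle$ is the cyclic string repeating $x$ in both directions. A read set $\mathfrak{R}$ is a finite set of nonempty finite strings (reads); a read is non-contained if it is not a substring of any other read of $\mathfrak{R}$. A read chain is a sequence of reads $r_1,\dots,r_n$ (repetitions allowed) together with integers $t_1,\dots,t_{n-1}$ with $1\le t_i\le\min(|r_i|,|r_{i+1}|)$ such that the length-$t_i$ suffix of $r_i$ equals the length-$t_i$ prefix of $r_{i+1}$; its merged string is $r_1$ followed, for $i=1,\dots,n-1$, by $r_{i+1}$ with its first $t_i$ characters removed. A chain is cyclic if $n\ge 2$ and $r_1=r_n$; then its merged string has the form $r_1x$, and if $x$ is nonempty the label of the cyclic chain is $\langle x\rangle$. $\mathrm{CC}(\mathfrak{R})$ is the set of labels of cyclic read chains. A finite string $v$ is a conductor for a set $\mathfrak{C}$ of cyclic strings if for all nonempty finite strings $a,b$ such that $va$ and $vb$ both end with $v$, we have $\langle ab\rangle\in\mathfrak{C}$ if and only if $\langle a\rangle\in\mathfrak{C}$ and $\langle b\rangle\in\mathfrak{C}$. *)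

theory Defs
  imports Main "HOL-Library.Sublist"
begin

text \<open>Cyclic strings: a bi-infinite periodic word, taken up to shift, is represented
by its shift-equivalence class (a set of functions int to the alphabet).\<close>

definition cyc :: "'a list \<Rightarrow> (int \<Rightarrow> 'a) set" where
  "cyc x = {f. \<exists>s::int. \<forall>i. f i = x ! nat ((i + s) mod int (length x))}"

definition read_chain :: "'a list set \<Rightarrow> 'a list list \<Rightarrow> nat list \<Rightarrow> bool" where
  "read_chain R rs ts \<longleftrightarrow> rs \<noteq> [] \<and> set rs \<subseteq> R \<and> length ts = length rs - 1 \<and>
     (\<forall>i < length ts. 1 \<le> ts ! i \<and> ts ! i \<le> min (length (rs ! i)) (length (rs ! Suc i)) \<and>
        drop (length (rs ! i) - ts ! i) (rs ! i) = take (ts ! i) (rs ! Suc i))"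

definition merged :: "'a list list \<Rightarrow> nat list \<Rightarrow> 'a list" where
  "merged rs ts = hd rs @ concat (map (\<lambda>i. drop (ts ! i) (rs ! Suc i)) [0..<length ts])"

definition cyclic_chain :: "'a list set \<Rightarrow> 'a list list \<Rightarrow> nat list \<Rightarrow> bool" where
  "cyclic_chain R rs ts \<longleftrightarrow> read_chain R rs ts \<and> length rs \<ge> 2 \<and> hd rs = last rs"

text \<open>Label: merged string is r1 x; label is the cyclic string of x (x nonempty).\<close>

definition CC :: "'a list set \<Rightarrow> (int \<Rightarrow> 'a) set set" where
  "CC R = {cyc (drop (length (hd rs)) (merged rs ts)) | rs ts.
             cyclic_chain R rs ts \<and> drop (length (hd rs)) (merged rs ts) \<noteq> []}"

definition conductor :: "'a list \<Rightarrow> (int \<Rightarrow> 'a) set set \<Rightarrow> bool" where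
  "conductor v C \<longleftrightarrow> (\<forall>a b. a \<noteq> [] \<longrightarrow> b \<noteq> [] \<longrightarrow> suffix v (v @ a) \<longrightarrow> suffix v (v @ b) \<longrightarrow>
      (cyc (a @ b) \<in> C \<longleftrightarrow> cyc a \<in> C \<and> cyc b \<in> C))"

definition read_set :: "'a list set \<Rightarrow> bool" where
  "read_set R \<longleftrightarrow> finite R \<and> (\<forall>r\<in>R. r \<noteq> [])"

definition non_contained :: "'a list set \<Rightarrow> 'a list \<Rightarrow> bool" where
  "non_contained R r \<longleftrightarrow> r \<in> R \<and> (\<forall>r'\<in>R. r' \<noteq> r \<longrightarrow> \<not> sublist r r')"

end

theory Submission
  imports Defs
begin


inductive walk :: "'a list set \<Rightarrow> 'a list \<Rightarrow> 'a list \<Rightarrow> 'a list \<Rightarrow> bool" for R where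
  wbase: "r \<in> R \<Longrightarrow> walk R r r r"
| wstep: "walk R r0 s r1 \<Longrightarrow> r2 \<in> R \<Longrightarrow> 1 \<le> t \<Longrightarrow> t \<le> length r1 \<Longrightarrow> t \<le> length r2 \<Longrightarrow>
     drop (length r1 - t) r1 = take t r2 \<Longrightarrow> walk R r0 (s @ drop t r2) r2"

lemma walk_basic: "walk R r0 s r1 \<Longrightarrow> r0 \<in> R \<and> r1 \<in> R \<and> prefix r0 s \<and> suffix r1 s"
proof (induction rule: walk.induct)
  case (wbase r) then show ?case by auto
next
  case (wstep r0 s r1 r2 t)
  have "r2 = drop (length r1 - t) r1 @ drop t r2"
    using wstep(6) by (metis append_take_drop_id)
  moreover have "suffix (drop (length r1 - t) r1) s"
    using wstep(7) suffix_drop suffix_order.order_trans by blast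
  ultimately have "suffix r2 (s @ drop t r2)"
    by (metis append.assoc suffix_def)
  then show ?case using wstep by (auto intro: prefix_prefix)
qed

lemma read_chain_snoc:
  assumes "rs \<noteq> []" "length ts = length rs - 1"
  shows "read_chain R (rs@[x]) (ts@[t]) \<longleftrightarrow> read_chain R rs ts \<and> x \<in> R \<and> 1 \<le> t \<and>
     t \<le> min (length (last rs)) (length x) \<and> drop (length (last rs) - t) (last rs) = take t x"
proof -
  obtain n where n: "length rs = Suc n" "length ts = n" using assms by (cases rs) auto
  define P where "P = (\<lambda>(ts::nat list) (rs::'a list list) i. 1 \<le> ts ! i \<and> ts ! i \<le> min (length (rs ! i)) (length (rs ! Suc i)) \<and>
        drop (length (rs ! i) - ts ! i) (rs ! i) = take (ts ! i) (rs ! Suc i))"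
  have A: "\<And>i. i < n \<Longrightarrow> P (ts@[t]) (rs@[x]) i = P ts rs i"
    using n by (auto simp: nth_append P_def)
  have B: "P (ts@[t]) (rs@[x]) n = (1 \<le> t \<and>
     t \<le> min (length (last rs)) (length x) \<and> drop (length (last rs) - t) (last rs) = take t x)"
    using n assms by (auto simp: nth_append last_conv_nth P_def)
  have C: "(\<forall>i<Suc n. P (ts@[t]) (rs@[x]) i) = ((\<forall>i<n. P ts rs i) \<and> P (ts@[t]) (rs@[x]) n)"
    using A by (auto simp: less_Suc_eq)
  have D: "read_chain R rs ts = (set rs \<subseteq> R \<and> (\<forall>i<n. P ts rs i))"
    unfolding read_chain_def P_def using n assms by auto
  have E: "read_chain R (rs@[x]) (ts@[t]) = (set rs \<subseteq> R \<and> x \<in> R \<and> (\<forall>i<Suc n. P (ts@[t]) (rs@[x]) i))"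
    unfolding read_chain_def P_def using n by auto
  show ?thesis using B C D E by auto
qed

lemma merged_snoc:
  assumes "rs \<noteq> []" "length ts = length rs - 1"
  shows "merged (rs@[x]) (ts@[t]) = merged rs ts @ drop t x"
proof -
  obtain n where n: "length rs = Suc n" "length ts = n" using assms by (cases rs) auto
  have "concat (map (\<lambda>i. drop ((ts @ [t]) ! i) ((rs @ [x]) ! Suc i)) [0..<n])
      = concat (map (\<lambda>i. drop (ts ! i) (rs ! Suc i)) [0..<n])"
    using n by (intro arg_cong[where f=concat] map_cong) (auto simp: nth_append)
  moreover have "(ts@[t]) ! n = t \<and> (rs@[x]) ! Suc n = x"
    using n by (auto simp: nth_append)
  ultimately show ?thesis using assms n unfolding merged_def by simp
qed

lemma chain_walk: "read_chain R rs ts \<Longrightarrow> walk R (hd rs) (merged rs ts) (last rs)"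
proof (induction rs arbitrary: ts rule: rev_induct)
  case Nil then show ?case by (simp add: read_chain_def)
next
  case (snoc x rs)
  show ?case
  proof (cases "rs = []")
    case True
    then have "ts = []" using snoc.prems by (simp add: read_chain_def)
    then show ?thesis using True snoc.prems by (simp add: read_chain_def merged_def wbase)
  next
    case False
    have lt: "length ts = length rs" using snoc.prems by (simp add: read_chain_def)
    then obtain ts' t where ts: "ts = ts' @ [t]" using False
      by (metis length_0_conv rev_exhaust)
    have l': "length ts' = length rs - 1" using lt ts by simp
    have rc: "read_chain R (rs@[x]) (ts'@[t])" using snoc.prems ts by simp
    note H = rc[unfolded read_chain_snoc[OF False l']]
    have "walk R (hd rs) (merged rs ts') (last rs)" using snoc.IH H by blast
    then have "walk R (hd rs) (merged rs ts' @ drop t x) x"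
      using H by (intro wstep) auto
    then show ?thesis using ts False merged_snoc[OF False l'] by simp
  qed
qed

lemma walk_chain: "walk R r0 s r1 \<Longrightarrow> \<exists>rs ts. read_chain R rs ts \<and> hd rs = r0 \<and> last rs = r1 \<and> merged rs ts = s"
proof (induction rule: walk.induct)
  case (wbase r)
  then show ?case by (intro exI[of _ "[r]"] exI[of _ "[]"]) (simp add: read_chain_def merged_def)
next
  case (wstep r0 s r1 r2 t)
  then obtain rs ts where H: "read_chain R rs ts" "hd rs = r0" "last rs = r1" "merged rs ts = s" by blast
  have ne: "rs \<noteq> []" and l: "length ts = length rs - 1" using H by (auto simp: read_chain_def)
  show ?case
    apply (intro exI[of _ "rs@[r2]"] exI[of _ "ts@[t]"])
    using H wstep ne l by (simp add: read_chain_snoc merged_snoc)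
qed



definition occ :: "'a list \<Rightarrow> nat \<Rightarrow> 'a list \<Rightarrow> bool" where
  "occ r q T \<longleftrightarrow> q + length r \<le> length T \<and> take (length r) (drop q T) = r"

definition maxocc :: "'a list set \<Rightarrow> 'a list \<Rightarrow> nat \<Rightarrow> 'a list \<Rightarrow> bool" where
  "maxocc R r q T \<longleftrightarrow> (\<forall>r2\<in>R. \<forall>q2. q2 \<le> q \<longrightarrow> q + length r \<le> q2 + length r2 \<longrightarrow> occ r2 q2 T \<longrightarrow> length r2 \<le> length r)"

lemma occ_nth: "occ r q T \<longleftrightarrow> q + length r \<le> length T \<and> (\<forall>i<length r. T ! (q+i) = r ! i)"
  unfolding occ_def by (auto simp: list_eq_iff_nth_eq)

lemma occ_app: "occ r q s \<Longrightarrow> occ r q (s @ x)"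
  by (auto simp: occ_nth nth_append)

lemma occ_prefix: "occ r q s \<Longrightarrow> prefix s T \<Longrightarrow> occ r q T"
  by (metis occ_app prefix_def)

lemma occ_drop: "occ r q (drop d s) \<Longrightarrow> r \<noteq> [] \<Longrightarrow> occ r (q + d) s"
  unfolding occ_nth by (cases r) (auto simp: add.assoc add.left_commute)

lemma maxocc_app: "maxocc R r q (s @ x) \<Longrightarrow> maxocc R r q s"
  unfolding maxocc_def using occ_app by blast

lemma maxocc_drop: "maxocc R r q s \<Longrightarrow> d \<le> q \<Longrightarrow> maxocc R r (q - d) (drop d s)"
  unfolding maxocc_def
proof (intro ballI allI impI)
  fix r2 q2 assume m: "\<forall>r2\<in>R. \<forall>q2\<le>q. q + length r \<le> q2 + length r2 \<longrightarrow> occ r2 q2 s \<longrightarrow> length r2 \<le> length r"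
    and d: "d \<le> q" and r2: "r2 \<in> R" and h: "q2 \<le> q - d" "q - d + length r \<le> q2 + length r2" "occ r2 q2 (drop d s)"
  show "length r2 \<le> length r"
  proof (cases "r2 = []")
    case False then show ?thesis using m[rule_format, OF r2, of "q2+d"] h d occ_drop by fastforce
  qed simp
qed

lemma suffix_occ: "suffix r s \<Longrightarrow> occ r (length s - length r) s"
  by (auto simp: suffix_def occ_def)

lemma walk_nonempty: "walk R r0 s r1 \<Longrightarrow> \<forall>r\<in>R. r \<noteq> [] \<Longrightarrow> r1 \<noteq> [] \<and> r0 \<noteq> []"
  using walk_basic by blast

lemma walk_concat: "walk R r1 s' r2 \<Longrightarrow> walk R r0 s r1 \<Longrightarrow> s' = r1 @ w \<Longrightarrow> walk R r0 (s @ w) r2"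
proof (induction arbitrary: w rule: walk.induct)
  case (wbase r) then show ?case by simp
next
  case (wstep r1' s1' r1'' r2' t)
  obtain w1 where w1: "s1' = r1' @ w1" using walk_basic[OF wstep(1)] by (auto simp: prefix_def)
  have "walk R r0 (s @ w1) r1''" using wstep w1 by blast
  then have "walk R r0 (s @ w1 @ drop t r2') r2'" using wstep by (metis append.assoc walk.wstep)
  moreover have "w = w1 @ drop t r2'" using wstep.prems(2) w1 by simp
  ultimately show ?case by simp
qed

lemma walk_iter: "walk R r (r @ z) r \<Longrightarrow> walk R r (r @ concat (replicate M z)) r"
proof (induction M)
  case 0 then show ?case using walk_basic by (fastforce intro: wbase)
next
  case (Suc M)
  then show ?case using walk_concat[of R r "r @ concat (replicate M z)" r r "r@z"] by simp
qed

lemma walk_cover: "walk R r0 s r1 \<Longrightarrow> i < length s \<Longrightarrow> \<exists>r2\<in>R. \<exists>q2. q2 \<le> i \<and> i < q2 + length r2 \<and> occ r2 q2 s"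
proof (induction arbitrary: i rule: walk.induct)
  case (wbase r) then show ?case by (intro bexI[of _ r] exI[of _ 0]) (auto simp: occ_def)
next
  case (wstep r0 s r1 r2 t)
  show ?case
  proof (cases "i < length s")
    case True then show ?thesis using wstep occ_app by blast
  next
    case False
    have "suffix r2 (s @ drop t r2)" using walk_basic walk.wstep[OF wstep(1-6)] by blast
    then have "occ r2 (length (s @ drop t r2) - length r2) (s @ drop t r2)" by (rule suffix_occ)
    then show ?thesis using False wstep by (intro bexI[of _ r2] exI[of _ "length (s @ drop t r2) - length r2"]) auto
  qed
qed



lemma walk_last_occ: "walk R r0 s r' \<Longrightarrow> occ r' (length s - length r') s \<and> length r' \<le> length s"
  using walk_basic suffix_occ suffix_length_le by blast

lemma pre_direct:
  assumes w: "walk R r0 s r'" and p: "prefix s T" and o: "occ r q T" and q: "q < length s"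
    and a: "length s - length r' \<le> q" and m: "maxocc R r q T" and rR: "r \<in> R"
  shows "walk R r0 (take (q + length r) T) r"
proof -
  define a where "a = length s - length r'"
  have o': "occ r' a s" and lr': "length r' \<le> length s" using walk_last_occ[OF w] a_def by auto
  have r'R: "r' \<in> R" using walk_basic[OF w] by blast
  have sT: "s = take (length s) T" using p by (metis append_eq_conv_conj prefix_def)
  have lsT: "length s \<le> length T" using p prefix_length_le by blast
  show ?thesis
  proof (cases "q + length r \<le> length s")
    case True
    have "a \<le> q" "q + length r \<le> a + length r'" using a True lr' unfolding a_def by auto
    then have "length r' \<le> length r" using m r'R occ_prefix[OF o' p] unfolding maxocc_def by blast
    then have eq: "a = q" "length s = q + length r" "length r' = length r" using True a a_def lr' by auto
    have "r' = take (length r) (drop q s)" using o' eq unfolding occ_def by simp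
    also have "\<dots> = take (length r) (drop q (take (length s) T))" using sT by simp
    also have "\<dots> = take (length r) (drop q T)" using eq by (simp add: drop_take)
    also have "\<dots> = r" using o unfolding occ_def by simp
    finally have "r' = r" .
    then show ?thesis using w eq sT by simp
  next
    case False
    define t where "t = length s - q"
    have t1: "1 \<le> t" "t \<le> length r'" "t \<le> length r" using q a False unfolding t_def by auto
    have eqd: "drop (length r' - t) r' = take t r"
    proof (rule nth_equalityI)
      show "length (drop (length r' - t) r') = length (take t r)" using t1 by auto
      fix i assume i: "i < length (drop (length r' - t) r')"
      have "drop (length r' - t) r' ! i = r' ! (length r' - t + i)" using i by simp
      also have "\<dots> = s ! (a + (length r' - t + i))" using o' i unfolding occ_nth by auto
      also have "a + (length r' - t + i) = q + i" using i t1 lr' q a unfolding a_def t_def by auto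
      also have "s ! (q + i) = T ! (q + i)" using i t1 q unfolding t_def
        by (subst sT) (auto simp: nth_take)
      also have "\<dots> = r ! i" using o i t1 unfolding occ_nth by auto
      finally show "drop (length r' - t) r' ! i = take t r ! i" using i t1 by simp
    qed
    have W: "walk R r0 (s @ drop t r) r" using wstep[OF w rR t1(1) t1(2) t1(3) eqd] .
    have lsr: "length (s @ drop t r) = q + length r" using o t1 q unfolding occ_def t_def by auto
    have "s @ drop t r = take (q + length r) T"
    proof (rule nth_equalityI)
      show "length (s @ drop t r) = length (take (q + length r) T)" using o lsr unfolding occ_def by auto
      fix i assume i: "i < length (s @ drop t r)"
      show "(s @ drop t r) ! i = take (q + length r) T ! i"
      proof (cases "i < length s")
        case True then show ?thesis using sT i q t1 unfolding t_def
          by (metis False le_eq_less_or_eq nat_le_linear nth_append nth_take order.strict_trans1)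
      next
        case F2: False
        have idx: "t + (i - length s) < length r" using i F2 t1 by auto
        have "(s @ drop t r) ! i = r ! (t + (i - length s))" using F2 i by (simp add: nth_append)
        also have "\<dots> = T ! (q + (t + (i - length s)))" using o idx unfolding occ_nth by auto
        also have "q + (t + (i - length s)) = i" using F2 q unfolding t_def by auto
        finally show ?thesis using i lsr by simp
      qed
    qed
    then show ?thesis using W by simp
  qed
qed

lemma walk_pre:
  "walk R r0 s r' \<Longrightarrow> prefix s T \<Longrightarrow> occ r q T \<Longrightarrow> q < length s \<Longrightarrow> maxocc R r q T \<Longrightarrow> r \<in> R
   \<Longrightarrow> walk R r0 (take (q + length r) T) r"
proof (induction rule: walk.induct)
  case (wbase r0)
  then show ?case using pre_direct[OF walk.wbase[OF wbase(1)]] by simp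
next
  case (wstep r0 s r1 r2 t)
  have W: "walk R r0 (s @ drop t r2) r2" using walk.wstep[OF wstep(1-6)] .
  show ?case
  proof (cases "length (s @ drop t r2) - length r2 \<le> q")
    case True then show ?thesis using pre_direct[OF W] wstep.prems by blast
  next
    case False
    have ls: "length r1 \<le> length s" using walk_last_occ[OF wstep(1)] by blast
    have "q < length s" using False wstep(5) ls by auto
    moreover have "prefix s T" using wstep.prems(1) by (metis prefix_order.dual_order.trans prefix_def)
    ultimately show ?thesis using wstep.IH wstep.prems by blast
  qed
qed

lemma walk_suf:
  "walk R r0 s r' \<Longrightarrow> occ r q s \<Longrightarrow> maxocc R r q s \<Longrightarrow> r \<in> R \<Longrightarrow> walk R r (drop q s) r'"
proof (induction rule: walk.induct)
  case (wbase r0)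
  have oc: "q + length r \<le> length r0" "take (length r) (drop q r0) = r" using wbase(2) unfolding occ_def by auto
  have "length r0 \<le> length r" using wbase unfolding maxocc_def occ_def by fastforce
  then have q0: "q = 0" and lr: "length r = length r0" using oc by linarith+
  have "r = r0" using oc(2) lr q0 by simp
  note this q0
  then show ?case using wbase walk.wbase by simp
next
  case (wstep r0 s r1 r2 t)
  let ?s = "s @ drop t r2"
  have W: "walk R r0 ?s r2" using walk.wstep[OF wstep(1-6)] .
  have ls: "length r1 \<le> length s" using walk_last_occ[OF wstep(1)] by blast
  show ?case
  proof (cases "q + length r \<le> length s")
    case True
    have "occ r q s" using wstep.prems(1) True unfolding occ_nth by (auto simp: nth_append)
    moreover have "maxocc R r q s" using wstep.prems(2) maxocc_app by blast
    ultimately have "walk R r (drop q s) r1" using wstep by blast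
    then have "walk R r (drop q s @ drop t r2) r2" using walk.wstep[OF _ wstep(2-6)] by blast
    then show ?thesis using True by simp
  next
    case False
    define a2 where "a2 = length s - t"
    have o2: "occ r2 a2 ?s" using walk_last_occ[OF W] wstep(5,4) ls unfolding a2_def by simp
    have la: "length ?s = a2 + length r2" using wstep(5,4) ls unfolding a2_def by simp
    have lq: "q + length r \<le> length ?s" using wstep.prems(1) unfolding occ_def by blast
    show ?thesis
    proof (cases "a2 \<le> q")
      case True
      have "length r2 \<le> length r" using wstep.prems(2) wstep(2) True lq la o2 unfolding maxocc_def by auto
      then have eq: "a2 = q" "length r2 = length r" using True lq la by auto
      have "drop q ?s = r2" using o2 eq la unfolding occ_def by simp
      moreover have "r = r2" using o2 wstep.prems(1) eq unfolding occ_def by simp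
      ultimately show ?thesis using walk.wbase wstep(2) by simp
    next
      case F2: False
      define t' where "t' = q + length r - a2"
      have t1: "1 \<le> t'" "t' \<le> length r" "t' \<le> length r2" using F2 False lq la wstep(4,5) ls
        unfolding t'_def a2_def by auto
      have eqd: "drop (length r - t') r = take t' r2"
      proof (rule nth_equalityI)
        show "length (drop (length r - t') r) = length (take t' r2)" using t1 by auto
        fix i assume i: "i < length (drop (length r - t') r)"
        have "drop (length r - t') r ! i = r ! (length r - t' + i)" using i by simp
        also have "\<dots> = ?s ! (q + (length r - t' + i))" using wstep.prems(1) i unfolding occ_nth by auto
        also have "q + (length r - t' + i) = a2 + i" using t1 F2 unfolding t'_def by auto
        also have "?s ! (a2 + i) = r2 ! i" using o2 i t1 unfolding occ_nth by auto
        finally show "drop (length r - t') r ! i = take t' r2 ! i" using i t1 by simp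
      qed
      have W2: "walk R r (r @ drop t' r2) r2" using walk.wstep[OF walk.wbase[OF wstep.prems(3)] wstep(2) t1 eqd] .
      have "r @ drop t' r2 = drop q ?s"
      proof (rule nth_equalityI)
        show "length (r @ drop t' r2) = length (drop q ?s)" using t1 la F2 unfolding t'_def by auto
        fix i assume i: "i < length (r @ drop t' r2)"
        show "(r @ drop t' r2) ! i = drop q ?s ! i"
        proof (cases "i < length r")
          case True
          have h: "?s ! (q + i) = r ! i" using wstep.prems(1) True unfolding occ_nth by blast
          have e1: "drop q ?s ! i = ?s ! (q + i)" using lq True by (intro nth_drop) auto
          have e2: "(r @ drop t' r2) ! i = r ! i" using True by (simp add: nth_append)
          show ?thesis by (simp only: e1 e2 h)
        next
          case F3: False
          have idx: "t' + (i - length r) < length r2" using F3 i t1 by auto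
          have "(r @ drop t' r2) ! i = r2 ! (t' + (i - length r))" using F3 i t1 by (simp add: nth_append)
          also have "\<dots> = ?s ! (a2 + (t' + (i - length r)))" using o2 idx unfolding occ_nth by simp
          also have "a2 + (t' + (i - length r)) = q + i" using F3 F2 t1 unfolding t'_def by auto
          finally have "(r @ drop t' r2) ! i = ?s ! (q + i)" .
          moreover have "drop q ?s ! i = ?s ! (q + i)" using lq by (intro nth_drop) auto
          ultimately show ?thesis by (simp only:)
        qed
      qed
      then show ?thesis using W2 by simp
    qed
  qed
qed



definition pw :: "'a list \<Rightarrow> nat \<Rightarrow> 'a list" where
  "pw z M = concat (replicate M z)"

lemma pw_length[simp]: "length (pw z M) = M * length z"
  unfolding pw_def by (induction M) auto

lemma pw_Suc: "pw z (Suc M) = z @ pw z M"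
  unfolding pw_def by simp

lemma pw_Suc': "pw z (Suc M) = pw z M @ z"
  unfolding pw_def by (metis concat.simps(2) concat_append concat.simps(1) append_Nil2 replicate_append_same replicate_Suc)

lemma pw_nth: "k < M * length z \<Longrightarrow> pw z M ! k = z ! (k mod length z)"
proof (induction M arbitrary: k)
  case 0 then show ?case by simp
next
  case (Suc M)
  show ?case
  proof (cases "k < length z")
    case True then show ?thesis by (simp add: pw_Suc nth_append)
  next
    case False
    then have "pw z (Suc M) ! k = pw z M ! (k - length z)" by (simp add: pw_Suc nth_append)
    also have "\<dots> = z ! ((k - length z) mod length z)" using Suc False by (intro Suc.IH) auto
    also have "(k - length z) mod length z = k mod length z" using False by (simp add: le_mod_geq)
    finally show ?thesis .
  qed
qed

lemma key_mod: "(0::nat) < L \<Longrightarrow> (n + nat (x mod int L)) mod L = nat ((x + int n) mod int L)"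
proof -
  assume L: "0 < L"
  have "int ((n + nat (x mod int L)) mod L) = (int n + x mod int L) mod int L"
    using L by (simp add: of_nat_mod)
  also have "\<dots> = (x + int n) mod int L" by (simp add: mod_add_right_eq add.commute)
  finally show ?thesis by (metis nat_int)
qed

lemma cyc_rotate_sub: "a \<noteq> [] \<Longrightarrow> cyc (rotate n a) \<subseteq> cyc a"
proof
  fix f assume a: "a \<noteq> []" and f: "f \<in> cyc (rotate n a)"
  then obtain s where s: "\<forall>i. f i = rotate n a ! nat ((i + s) mod int (length a))" by (auto simp: cyc_def)
  have "\<forall>i. f i = a ! nat ((i + (s + int n)) mod int (length a))"
  proof
    fix i
    have L: "0 < length a" using a by simp
    have lt: "nat ((i + s) mod int (length a)) < length a" using L
      by (metis nat_less_iff of_nat_0_less_iff pos_mod_bound pos_mod_sign)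
    have "f i = a ! ((n + nat ((i + s) mod int (length a))) mod length a)" using s lt by (simp add: nth_rotate)
    also have "\<dots> = a ! nat ((i + (s + int n)) mod int (length a))" using key_mod[OF L] by (simp add: add.assoc)
    finally show "f i = a ! nat ((i + (s + int n)) mod int (length a))" .
  qed
  then show "f \<in> cyc a" by (auto simp: cyc_def)
qed

lemma cyc_rotate: "a \<noteq> [] \<Longrightarrow> cyc (rotate n a) = cyc a"
proof
  assume a: "a \<noteq> []"
  show "cyc (rotate n a) \<subseteq> cyc a" using cyc_rotate_sub[OF a] .
  define m where "m = length a - n mod length a"
  have "rotate m (rotate n a) = rotate (m + n) a" by (simp add: rotate_rotate)
  also have "(m + n) mod length a = 0" using a unfolding m_def
    by (metis add.commute add_diff_inverse_nat mod_add_left_eq mod_less_divisor mod_self length_greater_0_conv not_less order_less_imp_le)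
  then have "rotate (m + n) a = a" by (metis rotate_conv_mod rotate0 id_apply)
  finally have "rotate m (rotate n a) = a" .
  then show "cyc a \<subseteq> cyc (rotate n a)" using cyc_rotate_sub[of "rotate n a" m] a by simp
qed

lemma cyc_sub:
  assumes y: "y \<noteq> []" and z: "z \<noteq> []" and e: "cyc z = cyc y"
  shows "\<exists>M. sublist (pw y N) (pw z M)"
proof -
  define f where "f = (\<lambda>i::int. y ! nat (i mod int (length y)))"
  have "f \<in> cyc y" unfolding cyc_def f_def by (auto intro: exI[of _ 0])
  then have "f \<in> cyc z" using e by simp
  then obtain s where s: "\<forall>i. f i = z ! nat ((i + s) mod int (length z))" unfolding cyc_def by blast
  define d where "d = nat (s mod int (length z))"
  have Lz: "0 < length z" using z by simp
  have d: "d < length z" unfolding d_def using Lz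
    by (metis nat_less_iff of_nat_0_less_iff pos_mod_bound pos_mod_sign)
  define M where "M = N * length y + 1"
  have hML: "d + N * length y \<le> M * length z"
  proof -
    have "N * length y * 1 \<le> N * length y * length z" using Lz by (intro mult_le_mono2) (simp add: Suc_le_eq)
    then have "N * length y \<le> N * (length y * length z)" by (simp add: mult.assoc)
    moreover have "M * length z = length z + N * (length y * length z)" unfolding M_def by (simp add: algebra_simps)
    ultimately show ?thesis using d by linarith
  qed
  have eq: "pw y N = take (N * length y) (drop d (pw z M))"
  proof (rule nth_equalityI)
    show "length (pw y N) = length (take (N * length y) (drop d (pw z M)))" using hML by auto
    fix i assume i: "i < length (pw y N)"
    then have i': "i < N * length y" by simp
    have "take (N * length y) (drop d (pw z M)) ! i = pw z M ! (d + i)" using i' hML by simp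
    also have "\<dots> = z ! ((d + i) mod length z)" using i' hML by (intro pw_nth) auto
    also have "(d + i) mod length z = nat ((int i + s) mod int (length z))"
      unfolding d_def using key_mod[OF Lz, of i s] by (simp add: add.commute)
    also have "z ! \<dots> = f (int i)" using s by simp
    also have "f (int i) = y ! (i mod length y)" unfolding f_def by (simp add: nat_mod_as_int)
    also have "\<dots> = pw y N ! i" using i' by (simp add: pw_nth)
    finally show "pw y N ! i = take (N * length y) (drop d (pw z M)) ! i" by simp
  qed
  have "sublist (take (N * length y) (drop d (pw z M))) (pw z M)"
    unfolding sublist_def
    by (metis append_take_drop_id)
  then show ?thesis using eq by auto
qed

lemma rot_window:
  assumes sv: "suffix v (v @ a)" and a: "a \<noteq> []" and k: "k \<le> length v"
  shows "\<exists>j. take (length a) (drop k (v @ a)) = rotate j a"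
proof -
  define P where "P = v @ a"
  define La where "La = length a"
  have La: "0 < La" using a unfolding La_def by simp
  obtain a' where a': "v @ a = a' @ v" using sv by (auto simp: suffix_def)
  have la': "length a' = length a" using arg_cong[OF a', of length] by simp
  have per: "\<And>j. j < length v \<Longrightarrow> P ! (j + La) = P ! j"
  proof -
    fix j assume j: "j < length v"
    have "P ! (j + La) = (a' @ v) ! (j + La)" using a' unfolding P_def by simp
    also have "\<dots> = v ! j" using la' unfolding La_def by (simp add: nth_append)
    also have "\<dots> = P ! j" using j unfolding P_def by (simp add: nth_append)
    finally show "P ! (j + La) = P ! j" .
  qed
  have main: "\<And>j. j < length P \<Longrightarrow> P ! j = a ! nat ((int j - int (length v)) mod int La)"
  proof -
    fix j show "j < length P \<Longrightarrow> P ! j = a ! nat ((int j - int (length v)) mod int La)"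
    proof (induction "length v - j" arbitrary: j rule: less_induct)
      case less
      show ?case
      proof (cases "length v \<le> j")
        case True
        have "j - length v < La" using less.prems True unfolding P_def La_def by simp
        then have "nat ((int j - int (length v)) mod int La) = j - length v" using True
          by (simp add: of_nat_diff[symmetric] nat_mod_as_int[symmetric] del: of_nat_diff)
        then show ?thesis using True unfolding P_def by (simp add: nth_append La_def)
      next
        case False
        have "P ! j = P ! (j + La)" using per False by simp
        also have "\<dots> = a ! nat ((int (j + La) - int (length v)) mod int La)"
        proof -
          have "length v - (j + La) < length v - j" using False La by simp
          moreover have "j + La < length P" using False unfolding P_def La_def by simp
          ultimately show ?thesis using less.hyps[of "j + La"] by blast
        qed
        also have "(int (j + La) - int (length v)) mod int La = (int j - int (length v)) mod int La"
        proof -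
          have "int (j + La) - int (length v) = (int j - int (length v)) + int La" by simp
          then show ?thesis by (simp only: mod_add_self2)
        qed
        finally show ?thesis .
      qed
    qed
  qed
  define n0 where "n0 = nat ((int k - int (length v)) mod int La)"
  have "take (length a) (drop k P) = rotate n0 a"
  proof (rule nth_equalityI)
    show "length (take (length a) (drop k P)) = length (rotate n0 a)" using k unfolding P_def by simp
    fix i assume i: "i < length (take (length a) (drop k P))"
    then have i': "i < length a" "k + i < length P" using k unfolding P_def by auto
    have "take (length a) (drop k P) ! i = P ! (k + i)" using i' by simp
    also have "\<dots> = a ! nat ((int (k + i) - int (length v)) mod int La)" using main i' by simp
    also have "nat ((int (k + i) - int (length v)) mod int La) = (i + n0) mod La"
      unfolding n0_def using key_mod[OF La, of i "int k - int (length v)"] by (simp add: algebra_simps)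
    also have "a ! ((i + n0) mod La) = rotate n0 a ! i" using i' unfolding La_def by (simp add: nth_rotate add.commute)
    finally show "take (length a) (drop k P) ! i = rotate n0 a ! i" .
  qed
  then show ?thesis unfolding P_def by blast
qed



lemma CC_walk: "cyc y \<in> CC R \<Longrightarrow> \<exists>r0 z. z \<noteq> [] \<and> walk R r0 (r0 @ z) r0 \<and> cyc y = cyc z"
proof -
  assume "cyc y \<in> CC R"
  then obtain rs ts where e: "cyc y = cyc (drop (length (hd rs)) (merged rs ts))"
    and c: "cyclic_chain R rs ts" and ne: "drop (length (hd rs)) (merged rs ts) \<noteq> []"
    unfolding CC_def by blast
  have w: "walk R (hd rs) (merged rs ts) (hd rs)" using chain_walk[of R rs ts] c
    unfolding cyclic_chain_def by auto
  obtain zs where zs: "merged rs ts = hd rs @ zs" using walk_basic[OF w] unfolding prefix_def by blast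
  show ?thesis
    apply (rule exI[of _ "hd rs"], rule exI[of _ zs])
    using w e ne zs by simp
qed

lemma walk_CC: "walk R r (r @ x) r \<Longrightarrow> x \<noteq> [] \<Longrightarrow> cyc x \<in> CC R"
proof -
  assume w: "walk R r (r @ x) r" and x: "x \<noteq> []"
  obtain rs ts where H: "read_chain R rs ts" "hd rs = r" "last rs = r" "merged rs ts = r @ x"
    using walk_chain[OF w] by blast
  have "length rs \<ge> 2"
  proof (rule ccontr)
    assume "\<not> 2 \<le> length rs"
    moreover have "rs \<noteq> []" using H(1) by (simp add: read_chain_def)
    moreover have "0 < length rs" using \<open>rs \<noteq> []\<close> by simp
    ultimately have "length rs = 1" by linarith
    then have "ts = []" using H(1) by (simp add: read_chain_def)
    then have "merged rs ts = r" using H(2) by (simp add: merged_def)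
    then show False using H(4) x by simp
  qed
  then have "cyclic_chain R rs ts" using H by (simp add: cyclic_chain_def)
  moreover have "drop (length (hd rs)) (merged rs ts) = x" using H by simp
  ultimately show ?thesis using x unfolding CC_def by blast
qed

definition anchor :: "'a list set \<Rightarrow> 'a list \<Rightarrow> 'a list \<Rightarrow> nat \<Rightarrow> bool" where
  "anchor R v r ofs \<longleftrightarrow> r \<in> R \<and> occ r ofs v \<and> (\<forall>T q. occ v q T \<longrightarrow> maxocc R r (q + ofs) T)"

lemma occ_trans: "occ r ofs v \<Longrightarrow> occ v q T \<Longrightarrow> occ r (q + ofs) T"
  unfolding occ_nth by (auto simp: add.assoc)

lemma occ_drop2: "occ r q s \<Longrightarrow> d \<le> q \<Longrightarrow> occ r (q - d) (drop d s)"
  unfolding occ_nth by auto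

lemma occ_inside: "occ r2 q2 T \<Longrightarrow> q2 \<le> q \<Longrightarrow> q + length r \<le> q2 + length r2 \<Longrightarrow> occ r q T \<Longrightarrow> occ r (q - q2) r2"
  unfolding occ_nth
proof (intro conjI allI impI)
  fix i assume h: "q2 + length r2 \<le> length T \<and> (\<forall>i<length r2. T ! (q2 + i) = r2 ! i)"
    "q2 \<le> q" "q + length r \<le> q2 + length r2" "q + length r \<le> length T \<and> (\<forall>i<length r. T ! (q + i) = r ! i)"
    and i: "i < length r"
  have b: "q - q2 + i < length r2" using h(2,3) i by linarith
  have "r2 ! (q - q2 + i) = T ! (q2 + (q - q2 + i))" using h(1) b by simp
  also have "\<dots> = T ! (q + i)" using h by simp
  also have "\<dots> = r ! i" using h i by simp
  finally show "r2 ! (q - q2 + i) = r ! i" .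
qed (auto)

lemma occ_sublist: "occ r d r2 \<Longrightarrow> sublist r r2"
  unfolding occ_def sublist_def
  by (metis append_take_drop_id)

lemma anchor_nc: "non_contained R r \<Longrightarrow> anchor R r r 0"
  unfolding anchor_def
proof (intro conjI allI impI)
  assume nc: "non_contained R r"
  then show "r \<in> R" by (simp add: non_contained_def)
  show "occ r 0 r" by (simp add: occ_def)
  fix T q assume oq: "occ r q T"
  show "maxocc R r (q + 0) T" unfolding maxocc_def
  proof (intro ballI allI impI)
    fix r2 q2 assume r2: "r2 \<in> R" and h: "q2 \<le> q + 0" "q + 0 + length r \<le> q2 + length r2" "occ r2 q2 T"
    have "sublist r r2" using occ_sublist[OF occ_inside[OF h(3)]] h oq by simp
    then have "r2 = r" using nc r2 unfolding non_contained_def by blast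
    then show "length r2 \<le> length r" by simp
  qed
qed

lemma walk_R_nonempty: "read_set R \<Longrightarrow> r \<in> R \<Longrightarrow> r \<noteq> []"
  unfolding read_set_def by blast

lemma G:
  assumes rs: "read_set R" and an: "anchor R v r ofs" and cy: "cyc y \<in> CC R" and y: "y \<noteq> []"
    and sb: "sublist (v @ c) (pw y N)" and sv: "suffix v (v @ c)"
  shows "walk R r (take (length r + length c) (drop ofs (v @ c))) r"
proof -
  obtain r0 z where z: "z \<noteq> []" and w0: "walk R r0 (r0 @ z) r0" and e: "cyc y = cyc z"
    using CC_walk[OF cy] by blast
  obtain M where "sublist (pw y N) (pw z M)" using cyc_sub[OF y z e[symmetric]] by blast
  then have "sublist (v @ c) (r0 @ pw z M)" using sb
    by (meson sublist_append_leftI sublist_order.order_trans)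
  then obtain u w where s: "r0 @ pw z M = u @ (v @ c) @ w" unfolding sublist_def by blast
  define s where "s = r0 @ pw z M"
  have ws: "walk R r0 s r0" unfolding s_def pw_def using walk_iter[OF w0] .
  have rR: "r \<in> R" and orv: "occ r ofs v" and mx: "\<And>T q. occ v q T \<Longrightarrow> maxocc R r (q + ofs) T"
    using an unfolding anchor_def by auto
  have rne: "r \<noteq> []" using rs rR by (rule walk_R_nonempty)
  have ov1: "occ v (length u) s" unfolding s_def s occ_def by simp
  obtain c' where c': "v @ c = c' @ v" using sv by (auto simp: suffix_def)
  have lc': "length c' = length c" using arg_cong[OF c', of length] by simp
  have ov2: "occ v (length u + length c) s" unfolding s_def s occ_def using c' lc'
    by (simp add: append_assoc[symmetric] del: append_assoc)
  have W1: "walk R r (drop (length u + ofs) s) r0"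
    using walk_suf[OF ws occ_trans[OF orv ov1] mx[OF ov1] rR] .
  define s' where "s' = drop (length u + ofs) s"
  have oc2: "occ r (length c) s'"
    using occ_drop2[OF occ_trans[OF orv ov2], of "length u + ofs"] unfolding s'_def by simp
  have mx2: "maxocc R r (length c) s'"
    using maxocc_drop[OF mx[OF ov2], of "length u + ofs"] unfolding s'_def by simp
  have "length c < length s'" using oc2 rne unfolding occ_def by (cases r) auto
  then have W2: "walk R r (take (length c + length r) s') r"
    using walk_pre[OF W1[folded s'_def] prefix_order.refl oc2 _ mx2 rR] by blast
  have ov: "ofs + length r \<le> length v" using orv unfolding occ_def by simp
  have "s' = drop ofs (v @ c) @ w" unfolding s'_def s_def s using ov by simp
  then have "take (length c + length r) s' = take (length r + length c) (drop ofs (v @ c))"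
    using ov by (simp add: add.commute)
  then show ?thesis using W2 by simp
qed

lemma from_G:
  assumes an: "anchor R v r ofs" and sv: "suffix v (v @ c)" and c: "c \<noteq> []"
    and w: "walk R r (take (length r + length c) (drop ofs (v @ c))) r"
  shows "cyc c \<in> CC R"
proof -
  have orv: "occ r ofs v" using an unfolding anchor_def by auto
  have ov: "ofs + length r \<le> length v" using orv unfolding occ_def by simp
  define x where "x = take (length c) (drop (ofs + length r) (v @ c))"
  have "take (length r + length c) (drop ofs (v @ c)) = take (length r) (drop ofs (v @ c)) @ x"
  proof -
    have "drop (length r) (drop ofs (v @ c)) = drop (ofs + length r) (v @ c)" by (simp only: drop_drop add.commute)
    then show ?thesis unfolding x_def take_add by simp
  qed
  also have "take (length r) (drop ofs (v @ c)) = r" using orv ov unfolding occ_def by simp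
  finally have "walk R r (r @ x) r" using w by simp
  moreover have "x \<noteq> []" using c ov unfolding x_def by simp
  ultimately have "cyc x \<in> CC R" by (rule walk_CC)
  moreover obtain j where "x = rotate j c" using rot_window[OF sv c, of "ofs + length r"] ov unfolding x_def by blast
  ultimately show ?thesis using cyc_rotate[OF c] by simp
qed



lemma suf_pw: "suffix v (v @ y) \<Longrightarrow> suffix v (v @ pw y N)"
proof (induction N)
  case 0 then show ?case by (simp add: pw_def)
next
  case (Suc N)
  obtain y' where y': "v @ y = y' @ v" using Suc.prems by (auto simp: suffix_def)
  obtain w where w: "v @ pw y N = w @ v" using Suc by (auto simp: suffix_def)
  have "v @ pw y (Suc N) = (v @ y) @ pw y N" by (simp add: pw_Suc)
  also have "\<dots> = y' @ (v @ pw y N)" using y' by simp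
  also have "\<dots> = y' @ w @ v" using w by simp
  finally have "v @ pw y (Suc N) = (y' @ w) @ v" by simp
  then show ?case by (simp add: suffix_def)
qed

lemma suffix_long: "suffix v (v @ x) \<Longrightarrow> length v \<le> length x \<Longrightarrow> suffix v x"
  by (metis suffix_append suffix_length_le le_antisym append_self_conv2 length_append le_add2 suffix_def
       add_le_same_cancel2 le_zero_eq length_0_conv)

lemma suffix_pw_big: "suffix v (v @ y) \<Longrightarrow> y \<noteq> [] \<Longrightarrow> suffix v (pw y (length v))"
proof -
  assume a: "suffix v (v @ y)" "y \<noteq> []"
  have "length v * 1 \<le> length v * length y" using a(2) by (intro mult_le_mono2) (simp add: Suc_le_eq)
  then show ?thesis using suffix_long[OF suf_pw[OF a(1)]] by simp
qed

lemma fac: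
  assumes sy: "suffix v (v @ y)" and y: "y \<noteq> []" and e: "y = p @ c @ q" and sp: "suffix v (v @ p)"
  shows "sublist (v @ c) (pw y (Suc (length v)))"
proof -
  obtain w where w: "pw y (length v) = w @ v" using suffix_pw_big[OF sy y] by (auto simp: suffix_def)
  obtain p' where p': "v @ p = p' @ v" using sp by (auto simp: suffix_def)
  have "pw y (Suc (length v)) = pw y (length v) @ y" by (simp add: pw_Suc')
  also have "\<dots> = w @ (v @ p) @ c @ q" using w e by simp
  also have "\<dots> = (w @ p') @ (v @ c) @ q" using p' by simp
  finally have "pw y (Suc (length v)) = (w @ p') @ (v @ c) @ q" .
  then show ?thesis unfolding sublist_def by blast
qed

lemma suffix_cat: "suffix v (v @ a) \<Longrightarrow> suffix v (v @ b) \<Longrightarrow> suffix v (v @ a @ b)"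
proof -
  assume "suffix v (v @ a)" "suffix v (v @ b)"
  then obtain a' b' where "v @ a = a' @ v" "v @ b = b' @ v" by (auto simp: suffix_def)
  then have "v @ a @ b = (a' @ b') @ v" by (metis append_assoc)
  then show ?thesis by (simp add: suffix_def)
qed

lemma G_split: "anchor R v r ofs \<Longrightarrow> take (length r + length c) (drop ofs (v @ c)) = r @ take (length c) (drop (ofs + length r) (v @ c))"
proof -
  assume an: "anchor R v r ofs"
  have orv: "occ r ofs v" using an unfolding anchor_def by auto
  have ov: "ofs + length r \<le> length v" using orv unfolding occ_def by simp
  have "drop (length r) (drop ofs (v @ c)) = drop (ofs + length r) (v @ c)" by (simp only: drop_drop add.commute)
  then have "take (length r + length c) (drop ofs (v @ c)) = take (length r) (drop ofs (v @ c)) @ take (length c) (drop (ofs + length r) (v @ c))"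
    unfolding take_add by simp
  also have "take (length r) (drop ofs (v @ c)) = r" using orv ov unfolding occ_def by simp
  finally show ?thesis .
qed

lemma xcat:
  assumes sa: "suffix v (v @ a)" and k: "k \<le> length v"
  shows "take (length a) (drop k (v @ a)) @ take (length b) (drop k (v @ b)) = take (length a + length b) (drop k (v @ a @ b))"
proof -
  obtain a' where a': "v @ a = a' @ v" using sa by (auto simp: suffix_def)
  have la: "length a' = length a" using arg_cong[OF a', of length] by simp
  have 1: "take (length a) (drop k (v @ a @ b)) = take (length a) (drop k (v @ a))"
  proof -
    have "drop k (v @ a @ b) = drop k (v @ a) @ b" using k by (simp add: append_assoc[symmetric] del: append_assoc)
    moreover have "length a \<le> length (drop k (v @ a))" using k by simp
    ultimately show ?thesis by simp
  qed
  have 2: "drop (length a) (drop k (v @ a @ b)) = drop k (v @ b)"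
  proof -
    have "drop (length a) (drop k (v @ a @ b)) = drop (length a + k) ((v @ a) @ b)" by (simp only: drop_drop append_assoc)
    also have "\<dots> = drop (length a + k) (a' @ v @ b)" using a' by simp
    also have "\<dots> = drop k (v @ b)" using la by simp
    finally show ?thesis .
  qed
  show ?thesis unfolding take_add 1 2 ..
qed

lemma conductor_gen:
  assumes rs: "read_set R"
    and anc: "\<And>y N. y \<noteq> [] \<Longrightarrow> cyc y \<in> CC R \<Longrightarrow> sublist v (pw y N) \<Longrightarrow> \<exists>r ofs. anchor R v r ofs"
  shows "conductor v (CC R)"
  unfolding conductor_def
proof (intro allI impI)
  fix a b :: "'a list"
  assume a: "a \<noteq> []" and b: "b \<noteq> []" and sa: "suffix v (v @ a)" and sb: "suffix v (v @ b)"
  have sab: "suffix v (v @ a @ b)" using suffix_cat[OF sa sb] .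
  have ab: "a @ b \<noteq> []" using a by simp
  have s0: "suffix v (v @ [])" by simp
  show "cyc (a @ b) \<in> CC R \<longleftrightarrow> cyc a \<in> CC R \<and> cyc b \<in> CC R"
  proof
    assume c: "cyc (a @ b) \<in> CC R"
    have "sublist (v @ []) (pw (a @ b) (Suc (length v)))" using fac[OF sab ab _ s0, of "[]" "a @ b"] by simp
    then have "\<exists>r ofs. anchor R v r ofs" using anc[OF ab c] by simp
    then obtain r ofs where an: "anchor R v r ofs" by blast
    have f1: "sublist (v @ a) (pw (a @ b) (Suc (length v)))" using fac[OF sab ab _ s0, of a b] by simp
    have f2: "sublist (v @ b) (pw (a @ b) (Suc (length v)))" using fac[OF sab ab _ sa, of b "[]"] by simp
    show "cyc a \<in> CC R \<and> cyc b \<in> CC R"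
      using from_G[OF an sa a G[OF rs an c ab f1 sa]] from_G[OF an sb b G[OF rs an c ab f2 sb]] by blast
  next
    assume c: "cyc a \<in> CC R \<and> cyc b \<in> CC R"
    have "sublist (v @ []) (pw a (Suc (length v)))" using fac[OF sa a _ s0, of "[]" a] by simp
    then have "\<exists>r ofs. anchor R v r ofs" using anc[OF a] c by simp
    then obtain r ofs where an: "anchor R v r ofs" by blast
    have fa: "sublist (v @ a) (pw a (Suc (length v)))" using fac[OF sa a _ s0, of a "[]"] by simp
    have fb: "sublist (v @ b) (pw b (Suc (length v)))" using fac[OF sb b _ s0, of b "[]"] by simp
    define k where "k = ofs + length r"
    have wa: "walk R r (r @ take (length a) (drop k (v @ a))) r"
      using G[OF rs an _ a fa sa] c G_split[OF an] unfolding k_def by metis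
    have wb: "walk R r (r @ take (length b) (drop k (v @ b))) r"
      using G[OF rs an _ b fb sb] c G_split[OF an] unfolding k_def by metis
    have w1: "walk R r ((r @ take (length a) (drop k (v @ a))) @ take (length b) (drop k (v @ b))) r"
      using walk_concat[OF wb wa] by simp
    have kv: "k \<le> length v" using an unfolding anchor_def occ_def k_def by simp
    have eqx: "take (length a) (drop k (v @ a)) @ take (length b) (drop k (v @ b)) = take (length (a @ b)) (drop k (v @ (a @ b)))"
      using xcat[OF sa kv, of b] by (simp only: length_append)
    have w: "walk R r (r @ take (length (a @ b)) (drop k (v @ (a @ b)))) r"
      using w1 unfolding append_assoc eqx .
    have "take (length (a @ b)) (drop k (v @ (a @ b))) \<noteq> []" using kv a by simp
    then have "cyc (take (length (a @ b)) (drop k (v @ (a @ b)))) \<in> CC R" using walk_CC[OF w] by blast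
    moreover obtain j where "take (length (a @ b)) (drop k (v @ (a @ b))) = rotate j (a @ b)"
      using rot_window[OF sab ab kv] by blast
    ultimately show "cyc (a @ b) \<in> CC R" using cyc_rotate[OF ab] by simp
  qed
qed

lemma anchor_2L:
  assumes rs: "read_set R" and Rne: "R \<noteq> {}" and L: "L = Max (length ` R)" and lv: "length v = 2 * L"
    and y: "y \<noteq> []" and cy: "cyc y \<in> CC R" and sb: "sublist v (pw y N)"
  shows "\<exists>r ofs. anchor R v r ofs"
proof -
  have fin: "finite R" using rs unfolding read_set_def by blast
  have lenb: "\<And>r. r \<in> R \<Longrightarrow> length r \<le> L" unfolding L using fin by (intro Max_ge) auto
  obtain r1 where r1: "r1 \<in> R" using Rne by blast
  have "r1 \<noteq> []" using rs r1 unfolding read_set_def by blast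
  then have L1: "1 \<le> L" using lenb[OF r1] by (cases r1) auto
  obtain r0 z where z: "z \<noteq> []" and w0: "walk R r0 (r0 @ z) r0" and e: "cyc y = cyc z"
    using CC_walk[OF cy] by blast
  obtain M where "sublist (pw y N) (pw z M)" using cyc_sub[OF y z e[symmetric]] by blast
  then have "sublist v (r0 @ pw z M)" using sb
    by (meson sublist_append_leftI sublist_order.order_trans)
  then obtain u w where s: "r0 @ pw z M = u @ v @ w" unfolding sublist_def by blast
  define s where "s = r0 @ pw z M"
  have ws: "walk R r0 s r0" unfolding s_def pw_def using walk_iter[OF w0] .
  have ov: "occ v (length u) s" unfolding s_def s occ_def by simp
  have "length u + L < length s" unfolding s_def s using lv L1 by simp
  then obtain r2 q2 where r2: "r2 \<in> R" "q2 \<le> length u + L" "length u + L < q2 + length r2" "occ r2 q2 s"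
    using walk_cover[OF ws] by blast
  have lr2: "length r2 \<le> L" using lenb[OF r2(1)] .
  define P where "P = (\<lambda>p. fst p \<in> R \<and> occ (fst p) (snd p) v \<and> snd p \<le> L \<and> L < snd p + length (fst p))"
  have "occ r2 (q2 - length u) v" using occ_inside[OF ov _ _ r2(4)] r2 lr2 lv by simp
  then have P0: "P (r2, q2 - length u)" unfolding P_def using r2 lr2 by auto
  have "\<forall>p. P p \<longrightarrow> length (fst p) < L + 1" unfolding P_def using lenb by fastforce
  then obtain p where Pp: "P p" and pmax: "\<forall>p'. P p' \<longrightarrow> length (fst p') \<le> length (fst p)"
    using Lattices_Big.ex_has_greatest_nat[of P "(r2, q2 - length u)" "\<lambda>p. length (fst p)" "L + 1"] P0 by blast
  obtain rr oo where p: "p = (rr, oo)" by (cases p)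
  have an: "anchor R v rr oo" unfolding anchor_def
  proof (intro conjI allI impI)
    show "rr \<in> R" "occ rr oo v" using Pp p unfolding P_def by auto
    fix T q assume oq: "occ v q T"
    show "maxocc R rr (q + oo) T" unfolding maxocc_def
    proof (intro ballI allI impI)
      fix r' q' assume r': "r' \<in> R" and h: "q' \<le> q + oo" "q + oo + length rr \<le> q' + length r'" "occ r' q' T"
      have lr': "length r' \<le> L" using lenb[OF r'] .
      have oL: "oo \<le> L" "L < oo + length rr" using Pp p unfolding P_def by auto
      have qq: "q \<le> q'" using h(2) lr' oL by linarith
      have "q' + length r' \<le> q + length v" using h(1) lr' oL lv by linarith
      then have "occ r' (q' - q) v" using occ_inside[OF oq qq _ h(3)] by simp
      then have "P (r', q' - q)" unfolding P_def using r' qq h oL by auto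
      then show "length r' \<le> length rr" using pmax p by fastforce
    qed
  qed
  then show ?thesis by blast
qed

theorem theorem7:
  fixes R :: "('a::finite) list set" and L :: nat
  assumes "read_set R" and "R \<noteq> {}" and "L = Max (length ` R)"
  shows "(\<forall>v. length v = 2 * L \<longrightarrow> conductor v (CC R)) \<and>
         (\<forall>r\<in>R. non_contained R r \<longrightarrow> conductor r (CC R))"
proof (intro conjI allI impI ballI)
  fix v :: "'a list" assume "length v = 2 * L"
  then show "conductor v (CC R)"
    using conductor_gen[OF assms(1)] anchor_2L[OF assms] by blast
next
  fix r assume "r \<in> R" "non_contained R r"
  then show "conductor r (CC R)"
    using conductor_gen[OF assms(1)] anchor_nc by blast
qed

end
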